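(* Let $(\mathcal{G},d_\mathcal{G})$, $(\mathcal{X},d_\mathcal{X})$, $(\mathcal{Y},d_\mathcal{Y})$ be pseudo-metric spaces and let $\mathcal{H}$ be the class of $c_\mathcal{H}$-Lipschitz continuous graph embeddings from $(\mathcal{G},d_\mathcal{G})$ to $(\mathcal{X},d_\mathcal{X})$. Assume the loss function $\ell\colon\mathcal{X}\times\mathcal{Y}\to\mathbb{R}^+$ is $c_\ell$-Lipschitz with respect to $d_\infty$. Then, for every $\varepsilon>0$, graph learning algorithms for $\mathcal{H}$ are $\bigl(\mathcal{N}(\mathcal{G},d_\mathcal{G},\varepsilon/(2c_\mathcal{H}))\cdot\mathcal{N}(\mathcal{Y},d_\mathcal{Y},\varepsilon/2),\ c_\ell\varepsilon\bigr)$-robust.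
   Context: A pseudo-metric satisfies $d(x,x)=0$, symmetry and the triangle inequality. $d_\infty((x,y),(x',y'))=\max\{d_\mathcal{X}(x,x'),d_\mathcal{Y}(y,y')\}$. $f$ is $c$-Lipschitz if $d(f(x),f(x'))\le c\,d(x,x')$. $\mathcal{N}(\mathcal{X},d,\varepsilon)$ is the minimal cardinality of an $\varepsilon$-cover (a subset $C$ such that every point is within distance $\varepsilon$ of some point of $C$). Learning setup: $\mathcal{Z}=\mathcal{G}\times\mathcal{Y}$ with a distribution; a graph learning algorithm maps each sample $\mathcal{S}$ (finite i.i.d. collection from $\mathcal{Z}$) to $h_\mathcal{S}\in\mathcal{H}$. The algorithm is $(K,\varepsilon)$-robust if for all samples $\mathcal{S}$, $\mathcal{Z}$ can be partitioned into $K$ sets $C_i$ such that whenever $(G,y)\in\mathcal{S}\cap C_i$ and $(G',y')\in C_i$, $|\ell(h_\mathcal{S}(G),y)-\ell(h_\mathcal{S}(G'),y')|<\varepsilon$. *)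

theory Defs
  imports Complex_Main
begin

definition pseudo_metric :: "('a \<Rightarrow> 'a \<Rightarrow> real) \<Rightarrow> bool" where
  "pseudo_metric d \<longleftrightarrow> (\<forall>x. d x x = 0) \<and> (\<forall>x y. d x y = d y x)
     \<and> (\<forall>x y z. d x z \<le> d x y + d y z)"

definition d_inf :: "('a \<Rightarrow> 'a \<Rightarrow> real) \<Rightarrow> ('b \<Rightarrow> 'b \<Rightarrow> real)
    \<Rightarrow> ('a \<times> 'b) \<Rightarrow> ('a \<times> 'b) \<Rightarrow> real" where
  "d_inf dA dB p q = max (dA (fst p) (fst q)) (dB (snd p) (snd q))"

definition lipschitz_wrt :: "('a \<Rightarrow> 'a \<Rightarrow> real) \<Rightarrow> ('b \<Rightarrow> 'b \<Rightarrow> real) \<Rightarrow> real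
    \<Rightarrow> ('a \<Rightarrow> 'b) \<Rightarrow> bool" where
  "lipschitz_wrt dA dB c f \<longleftrightarrow> (\<forall>x x'. dB (f x) (f x') \<le> c * dA x x')"

definition real_dist :: "real \<Rightarrow> real \<Rightarrow> real" where
  "real_dist a b = \<bar>a - b\<bar>"

definition is_cover :: "('a \<Rightarrow> 'a \<Rightarrow> real) \<Rightarrow> real \<Rightarrow> 'a set \<Rightarrow> bool" where
  "is_cover d eps C \<longleftrightarrow> (\<forall>x. \<exists>c\<in>C. d x c < eps)"

definition covering_number :: "('a \<Rightarrow> 'a \<Rightarrow> real) \<Rightarrow> real \<Rightarrow> nat" where
  "covering_number d eps = (LEAST n. \<exists>C. finite C \<and> card C = n \<and> is_cover d eps C)"

definition robust :: "(('g \<times> 'y) list \<Rightarrow> 'g \<Rightarrow> 'x) \<Rightarrow> ('x \<times> 'y \<Rightarrow> real)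
    \<Rightarrow> nat \<Rightarrow> real \<Rightarrow> bool" where
  "robust A l K eps \<longleftrightarrow>
     (\<forall>S. \<exists>C :: nat \<Rightarrow> ('g \<times> 'y) set.
        (\<Union>i<K. C i) = UNIV \<and>
        (\<forall>i<K. \<forall>j<K. i \<noteq> j \<longrightarrow> C i \<inter> C j = {}) \<and>
        (\<forall>i<K. \<forall>g y g' y'. (g, y) \<in> set S \<and> (g, y) \<in> C i \<and> (g', y') \<in> C i \<longrightarrow>
            \<bar>l (A S g, y) - l (A S g', y')\<bar> < eps))"

end

theory Submission
  imports Defs
begin

lemma min_cover:
  assumes "\<exists>C. finite C \<and> is_cover d e C"
  shows "\<exists>C. finite C \<and> card C = covering_number d e \<and> is_cover d e C"
  unfolding covering_number_def
  using LeastI_ex[where P="\<lambda>n. \<exists>C. finite C \<and> card C = n \<and> is_cover d e C"] assms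
  by blast

theorem mainTheorem8:
  fixes dG :: "'g \<Rightarrow> 'g \<Rightarrow> real"
    and dX :: "'x \<Rightarrow> 'x \<Rightarrow> real"
    and dY :: "'y \<Rightarrow> 'y \<Rightarrow> real"
    and cH cl eps :: real
    and l :: "'x \<times> 'y \<Rightarrow> real"
    and A :: "('g \<times> 'y) list \<Rightarrow> 'g \<Rightarrow> 'x"
  assumes "pseudo_metric dG" and "pseudo_metric dX" and "pseudo_metric dY"
    and "cH > 0" and "cl > 0"
    and "\<forall>p. l p \<ge> 0"
    and "lipschitz_wrt (d_inf dX dY) real_dist cl l"
    and "\<forall>S. A S \<in> {h. lipschitz_wrt dG dX cH h}"
    and "eps > 0"
    and "\<exists>C. finite C \<and> is_cover dG (eps / (2 * cH)) C"
    and "\<exists>C. finite C \<and> is_cover dY (eps / 2) C"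
  shows "robust A l (covering_number dG (eps / (2 * cH)) * covering_number dY (eps / 2)) (cl * eps)"
proof -
  obtain CG where CG: "finite CG" "card CG = covering_number dG (eps / (2 * cH))"
      "is_cover dG (eps / (2 * cH)) CG" using min_cover[OF assms(10)] by blast
  obtain CY where CY: "finite CY" "card CY = covering_number dY (eps / 2)"
      "is_cover dY (eps / 2) CY" using min_cover[OF assms(11)] by blast
  define K where "K = covering_number dG (eps / (2 * cH)) * covering_number dY (eps / 2)"
  have fin: "finite (CG \<times> CY)" using CG CY by simp
  have cK: "card (CG \<times> CY) = K" using CG CY K_def by (simp add: card_cartesian_product)
  obtain en where en: "bij_betw en {0..<K} (CG \<times> CY)"
    using ex_bij_betw_nat_finite[OF fin] cK by metis
  define fg where "fg g = (SOME c. c \<in> CG \<and> dG g c < eps / (2 * cH))" for g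
  define fy where "fy y = (SOME c. c \<in> CY \<and> dY y c < eps / 2)" for y
  have fg: "fg g \<in> CG \<and> dG g (fg g) < eps / (2 * cH)" for g
    unfolding fg_def by (rule someI_ex) (use CG(3) in \<open>auto simp: is_cover_def\<close>)
  have fy: "fy y \<in> CY \<and> dY y (fy y) < eps / 2" for y
    unfolding fy_def by (rule someI_ex) (use CY(3) in \<open>auto simp: is_cover_def\<close>)
  have pmG: "dG a b \<le> dG a c + dG c b" "dG a b = dG b a" for a b c
    using assms(1) unfolding pseudo_metric_def by blast+
  have pmY: "dY a b \<le> dY a c + dY c b" "dY a b = dY b a" for a b c
    using assms(3) unfolding pseudo_metric_def by blast+
  show ?thesis unfolding robust_def K_def[symmetric]
  proof
    fix S
    define C where "C i = {(g, y). (fg g, fy y) = en i}" for i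
    have "(\<Union>i<K. C i) = UNIV"
    proof (rule set_eqI)
      fix p :: "'g \<times> 'y"
      obtain g y where p: "p = (g, y)" by fastforce
      have "(fg g, fy y) \<in> en ` {0..<K}" using en fg fy by (simp add: bij_betw_def)
      then obtain i where "i < K" "(fg g, fy y) = en i" by auto
      then show "p \<in> (\<Union>i<K. C i) \<longleftrightarrow> p \<in> UNIV" unfolding C_def p by auto
    qed
    moreover have "\<forall>i<K. \<forall>j<K. i \<noteq> j \<longrightarrow> C i \<inter> C j = {}"
      using en unfolding C_def bij_betw_def inj_on_def by fastforce
    moreover have "\<forall>i<K. \<forall>g y g' y'. (g, y) \<in> set S \<and> (g, y) \<in> C i \<and> (g', y') \<in> C i \<longrightarrow>
            \<bar>l (A S g, y) - l (A S g', y')\<bar> < cl * eps"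
    proof (intro allI impI, elim conjE)
      fix i g y g' y'
      assume "(g, y) \<in> C i" "(g', y') \<in> C i"
      then have e1: "fg g = fg g'" and e2: "fy y = fy y'" unfolding C_def by (metis (mono_tags) case_prodD mem_Collect_eq prod.inject)+
      have "dG g g' \<le> dG g (fg g) + dG (fg g') g'" using pmG e1 by metis
      also have "\<dots> < eps / cH" using fg[of g] fg[of g'] pmG(2)[of "fg g'" g'] by simp
      finally have dg: "dG g g' < eps / cH" .
      have "dX (A S g) (A S g') \<le> cH * dG g g'"
        using assms(8) unfolding lipschitz_wrt_def by blast
      also have "\<dots> < cH * (eps / cH)" using dg assms(4) by (intro mult_strict_left_mono)
      also have "\<dots> = eps" using assms(4) by simp
      finally have dx: "dX (A S g) (A S g') < eps" .
      have "dY y y' \<le> dY y (fy y) + dY (fy y') y'" using pmY e2 by metis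
      also have "\<dots> < eps" using fy[of y] fy[of y'] pmY(2)[of "fy y'" y'] by simp
      finally have dy: "dY y y' < eps" .
      have "real_dist (l (A S g, y)) (l (A S g', y')) \<le> cl * d_inf dX dY (A S g, y) (A S g', y')"
        using assms(7) unfolding lipschitz_wrt_def by blast
      also have "\<dots> < cl * eps" using dx dy assms(5) by (simp add: d_inf_def)
      finally show "\<bar>l (A S g, y) - l (A S g', y')\<bar> < cl * eps" by (simp add: real_dist_def)
    qed
    ultimately show "\<exists>C :: nat \<Rightarrow> ('g \<times> 'y) set. (\<Union>i<K. C i) = UNIV \<and>
        (\<forall>i<K. \<forall>j<K. i \<noteq> j \<longrightarrow> C i \<inter> C j = {}) \<and>
        (\<forall>i<K. \<forall>g y g' y'. (g, y) \<in> set S \<and> (g, y) \<in> C i \<and> (g', y') \<in> C i \<longrightarrow>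
            \<bar>l (A S g, y) - l (A S g', y')\<bar> < cl * eps)" by blast
  qed
qed

end
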